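(* Let $n\geq 4$ and let $\delta: VT_n\to\mathrm{GL}_{n+1}(\mathbb{C})$ be a homogeneous $3$-local representation of the virtual twin group $VT_n$. Then $\delta$ is equivalent to one of the fourteen representations $\delta_j$, $1\leq j\leq 14$, defined by $\delta_j(s_i)=\mathrm{diag}(I_{i-1},M_j,I_{n-i-1})$ and $\delta_j(\rho_i)=\mathrm{diag}(I_{i-1},N_j,I_{n-i-1})$ for all $1\leq i\leq n-1$, where: (1) $M_1=\begin{pmatrix}1&0&0\\0&e&\frac{1-e^2}{h}\\0&h&-e\end{pmatrix}$, $N_1=\begin{pmatrix}1&0&0\\0&0&p\\0&\frac1p&0\end{pmatrix}$, $e\in\mathbb{C}$, $h,p\in\mathbb{C}^*$; (2) $M_2=\begin{pmatrix}-e&\frac{1-e^2}{d}&0\\d&e&0\\0&0&1\end{pmatrix}$, $N_2=\begin{pmatrix}0&k&0\\\frac1k&0&0\\0&0&1\end{pmatrix}$, $e\in\mathbb{C}$, $d,k\in\mathbb{C}^*$; (3) $M_3=\begin{pmatrix}1&0&0\\d&-1&2p-dp^2\\0&0&1\end{pmatrix}$, $N_3=\begin{pmatrix}1&0&0\\\frac1p&-1&p\\0&0&1\end{pmatrix}$, $d\in\mathbb{C}$, $p\in\mathbb{C}^*$; (4) $M_4=\begin{pmatrix}1&2k-hk^2&0\\0&-1&0\\0&h&1\end{pmatrix}$, $N_4=\begin{pmatrix}1&k&0\\0&-1&0\\0&\frac1k&1\end{pmatrix}$, $h\in\mathbb{C}$, $k\in\mathbb{C}^*$; (5) $M_5=\begin{pmatrix}1&b&0\\0&-1&0\\0&0&1\end{pmatrix}$,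 $N_5=\begin{pmatrix}0&k&0\\\frac1k&0&0\\0&0&1\end{pmatrix}$, $b\in\mathbb{C}$, $k\in\mathbb{C}^*$; (6) $M_6=\begin{pmatrix}-1&b&0\\0&1&0\\0&0&1\end{pmatrix}$, $N_6=\begin{pmatrix}0&k&0\\\frac1k&0&0\\0&0&1\end{pmatrix}$, $b\in\mathbb{C}$, $k\in\mathbb{C}^*$; (7) $M_7=I_3$, $N_7=\begin{pmatrix}1&0&0\\\frac1p&-1&p\\0&0&1\end{pmatrix}$, $p\in\mathbb{C}^*$; (8) $M_8=I_3$, $N_8=\begin{pmatrix}1&k&0\\0&-1&0\\0&\frac1k&1\end{pmatrix}$, $k\in\mathbb{C}^*$; (9) $M_9=\mathrm{diag}(1,-1,-1)$, $N_9=\begin{pmatrix}1&0&0\\0&0&p\\0&\frac1p&0\end{pmatrix}$, $p\in\mathbb{C}^*$; (10) $M_{10}=\mathrm{diag}(1,-1,1)$, $N_{10}=\begin{pmatrix}1&0&0\\0&0&p\\0&\frac1p&0\end{pmatrix}$, $p\in\mathbb{C}^*$; (11) $M_{11}=I_3$, $N_{11}=\begin{pmatrix}1&0&0\\0&0&p\\0&\frac1p&0\end{pmatrix}$, $p\in\mathbb{C}^*$; (12) $M_{12}=\mathrm{diag}(-1,-1,1)$, $N_{12}=\begin{pmatrix}0&k&0\\\frac1k&0&0\\0&0&1\end{pmatrix}$, $k\in\mathbb{C}^*$; (13) $M_{13}=I_3$, $N_{13}=\begin{pmatrix}0&k&0\\\frac1k&0&0\\0&0&1\end{pmatrix}$,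 $k\in\mathbb{C}^*$; (14) $M_{14}=I_3$, $N_{14}=I_3$.
   Context: The virtual twin group $VT_n$ ($n\geq 2$) has generators $s_1,\dots,s_{n-1},\rho_1,\dots,\rho_{n-1}$ and defining relations: $s_i^2=1$ ($1\le i\le n-1$); $s_is_j=s_js_i$ ($|i-j|\ge2$); $\rho_i\rho_{i+1}\rho_i=\rho_{i+1}\rho_i\rho_{i+1}$ ($1\le i\le n-2$); $\rho_i\rho_j=\rho_j\rho_i$ ($|i-j|\ge2$); $\rho_i^2=1$ ($1\le i\le n-1$); $s_i\rho_j=\rho_js_i$ ($|i-j|\ge2$); $\rho_i\rho_{i+1}s_i=s_{i+1}\rho_i\rho_{i+1}$ ($1\le i\le n-2$). A representation $\delta:VT_n\to\mathrm{GL}_{n+1}(\mathbb{C})$ is homogeneous $3$-local if there are fixed $M,N\in\mathrm{GL}_3(\mathbb{C})$ with $\delta(s_i)=\mathrm{diag}(I_{i-1},M,I_{n-i-1})$ and $\delta(\rho_i)=\mathrm{diag}(I_{i-1},N,I_{n-i-1})$ for all $1\le i\le n-1$, where $\mathrm{diag}$ denotes block-diagonal matrices and $I_r$ the $r\times r$ identity. $\mathbb{C}^*=\mathbb{C}\setminus\{0\}$. Equivalent means conjugate by an invertible matrix. *)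

theory Defs
  imports "Jordan_Normal_Form.Matrix"
begin

definition m3 :: "complex list list \<Rightarrow> complex mat" where
  "m3 rs = mat_of_rows_list 3 rs"

text \<open>The block-diagonal matrix diag(I_{i-1}, A, I_{n-i-1}) of size (n+1)x(n+1)
  (0-based rows/columns i-1, i, i+1 carry the 3x3 block A).\<close>
definition local_mat :: "nat \<Rightarrow> nat \<Rightarrow> complex mat \<Rightarrow> complex mat" where
  "local_mat n i A = mat (n+1) (n+1) (\<lambda>(r,c).
      if i - 1 \<le> r \<and> r \<le> i + 1 \<and> i - 1 \<le> c \<and> c \<le> i + 1
      then A $$ (r - (i - 1), c - (i - 1))
      else (if r = c then 1 else 0))"

text \<open>A representation of VT_n is the same as an assignment of invertible matrices to the
  generators satisfying these relations.\<close>
definition VT_rels :: "nat \<Rightarrow> (nat \<Rightarrow> complex mat) \<Rightarrow> (nat \<Rightarrow> complex mat) \<Rightarrow> bool" where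
  "VT_rels n S R \<longleftrightarrow>
     (\<forall>i\<in>{1..n-1}. S i * S i = 1\<^sub>m (n+1)) \<and>
     (\<forall>i\<in>{1..n-1}. \<forall>j\<in>{1..n-1}. (i + 2 \<le> j \<or> j + 2 \<le> i) \<longrightarrow> S i * S j = S j * S i) \<and>
     (\<forall>i\<in>{1..n-2}. R i * R (i+1) * R i = R (i+1) * R i * R (i+1)) \<and>
     (\<forall>i\<in>{1..n-1}. \<forall>j\<in>{1..n-1}. (i + 2 \<le> j \<or> j + 2 \<le> i) \<longrightarrow> R i * R j = R j * R i) \<and>
     (\<forall>i\<in>{1..n-1}. R i * R i = 1\<^sub>m (n+1)) \<and>
     (\<forall>i\<in>{1..n-1}. \<forall>j\<in>{1..n-1}. (i + 2 \<le> j \<or> j + 2 \<le> i) \<longrightarrow> S i * R j = R j * S i) \<and>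
     (\<forall>i\<in>{1..n-2}. R i * R (i+1) * S i = S (i+1) * R i * R (i+1))"

definition hom_3local_rep :: "nat \<Rightarrow> complex mat \<Rightarrow> complex mat \<Rightarrow> bool" where
  "hom_3local_rep n M N \<longleftrightarrow>
     M \<in> carrier_mat 3 3 \<and> N \<in> carrier_mat 3 3 \<and> invertible_mat M \<and> invertible_mat N \<and>
     VT_rels n (\<lambda>i. local_mat n i M) (\<lambda>i. local_mat n i N)"

definition equiv_local :: "nat \<Rightarrow> complex mat \<Rightarrow> complex mat \<Rightarrow> complex mat \<Rightarrow> complex mat \<Rightarrow> bool" where
  "equiv_local n M N M' N' \<longleftrightarrow>
     (\<exists>P Q. P \<in> carrier_mat (n+1) (n+1) \<and> Q \<in> carrier_mat (n+1) (n+1) \<and>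
        P * Q = 1\<^sub>m (n+1) \<and> Q * P = 1\<^sub>m (n+1) \<and>
        (\<forall>i\<in>{1..n-1}. local_mat n i M = P * local_mat n i M' * Q \<and>
                       local_mat n i N = P * local_mat n i N' * Q))"

definition family :: "nat \<Rightarrow> complex mat \<Rightarrow> complex mat \<Rightarrow> bool" where
  "family j M N \<longleftrightarrow>
   (j = 1 \<and> (\<exists>e h p. h \<noteq> 0 \<and> p \<noteq> 0 \<and>
      M = m3 [[1,0,0],[0,e,(1 - e^2)/h],[0,h,-e]] \<and> N = m3 [[1,0,0],[0,0,p],[0,1/p,0]])) \<or>
   (j = 2 \<and> (\<exists>e d k. d \<noteq> 0 \<and> k \<noteq> 0 \<and>
      M = m3 [[-e,(1 - e^2)/d,0],[d,e,0],[0,0,1]] \<and> N = m3 [[0,k,0],[1/k,0,0],[0,0,1]])) \<or>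
   (j = 3 \<and> (\<exists>d p. p \<noteq> 0 \<and>
      M = m3 [[1,0,0],[d,-1,2*p - d*p^2],[0,0,1]] \<and> N = m3 [[1,0,0],[1/p,-1,p],[0,0,1]])) \<or>
   (j = 4 \<and> (\<exists>h k. k \<noteq> 0 \<and>
      M = m3 [[1,2*k - h*k^2,0],[0,-1,0],[0,h,1]] \<and> N = m3 [[1,k,0],[0,-1,0],[0,1/k,1]])) \<or>
   (j = 5 \<and> (\<exists>b k. k \<noteq> 0 \<and>
      M = m3 [[1,b,0],[0,-1,0],[0,0,1]] \<and> N = m3 [[0,k,0],[1/k,0,0],[0,0,1]])) \<or>
   (j = 6 \<and> (\<exists>b k. k \<noteq> 0 \<and>
      M = m3 [[-1,b,0],[0,1,0],[0,0,1]] \<and> N = m3 [[0,k,0],[1/k,0,0],[0,0,1]])) \<or>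
   (j = 7 \<and> (\<exists>p. p \<noteq> 0 \<and>
      M = 1\<^sub>m 3 \<and> N = m3 [[1,0,0],[1/p,-1,p],[0,0,1]])) \<or>
   (j = 8 \<and> (\<exists>k. k \<noteq> 0 \<and>
      M = 1\<^sub>m 3 \<and> N = m3 [[1,k,0],[0,-1,0],[0,1/k,1]])) \<or>
   (j = 9 \<and> (\<exists>p. p \<noteq> 0 \<and>
      M = m3 [[1,0,0],[0,-1,0],[0,0,-1]] \<and> N = m3 [[1,0,0],[0,0,p],[0,1/p,0]])) \<or>
   (j = 10 \<and> (\<exists>p. p \<noteq> 0 \<and>
      M = m3 [[1,0,0],[0,-1,0],[0,0,1]] \<and> N = m3 [[1,0,0],[0,0,p],[0,1/p,0]])) \<or>
   (j = 11 \<and> (\<exists>p. p \<noteq> 0 \<and>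
      M = 1\<^sub>m 3 \<and> N = m3 [[1,0,0],[0,0,p],[0,1/p,0]])) \<or>
   (j = 12 \<and> (\<exists>k. k \<noteq> 0 \<and>
      M = m3 [[-1,0,0],[0,-1,0],[0,0,1]] \<and> N = m3 [[0,k,0],[1/k,0,0],[0,0,1]])) \<or>
   (j = 13 \<and> (\<exists>k. k \<noteq> 0 \<and>
      M = 1\<^sub>m 3 \<and> N = m3 [[0,k,0],[1/k,0,0],[0,0,1]])) \<or>
   (j = 14 \<and> M = 1\<^sub>m 3 \<and> N = 1\<^sub>m 3)"

end

theory Submission
  imports Defs "Jordan_Normal_Form.Determinant"
begin

lemma local_mat_carrier[simp]: "local_mat n i A \<in> carrier_mat (n+1) (n+1)"
  by (simp add: local_mat_def)

lemma local_mat_idx: "r \<le> n \<Longrightarrow> c \<le> n \<Longrightarrow> local_mat n i A $$ (r,c) =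
   (if i - 1 \<le> r \<and> r \<le> i + 1 \<and> i - 1 \<le> c \<and> c \<le> i + 1
      then A $$ (r - (i - 1), c - (i - 1)) else (if r = c then 1 else 0))"
  by (simp add: local_mat_def)

lemma prod5:
  assumes "n \<ge> 4" "i \<le> 3" "r < 5" "c \<le> n" "Y \<in> carrier_mat (n+1) (n+1)"
  shows "(local_mat n i A * Y) $$ (r,c) = (\<Sum>k<5. local_mat n i A $$ (r,k) * Y $$ (k,c))"
proof -
  have "(local_mat n i A * Y) $$ (r,c) = (\<Sum>k\<in>{0..<n+1}. local_mat n i A $$ (r,k) * Y $$ (k,c))"
    using assms by (simp add: scalar_prod_def local_mat_def)
  also have "{0..<n+1} = {..<5} \<union> {5..<n+1}" using assms by auto
  also have "(\<Sum>k\<in>{..<5} \<union> {5..<n+1}. local_mat n i A $$ (r,k) * Y $$ (k,c))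
     = (\<Sum>k<5. local_mat n i A $$ (r,k) * Y $$ (k,c)) + (\<Sum>k\<in>{5..<n+1}. local_mat n i A $$ (r,k) * Y $$ (k,c))"
    by (rule sum.union_disjoint) auto
  also have "(\<Sum>k\<in>{5..<n+1}. local_mat n i A $$ (r,k) * Y $$ (k,c)) = 0"
    using assms by (intro sum.neutral) (auto simp: local_mat_idx)
  finally show ?thesis by simp
qed

lemma sum5: "(\<Sum>k<(5::nat). f k) = f 0 + f 1 + f 2 + f 3 + (f 4 :: 'a::comm_monoid_add)"
  by (simp add: numeral_eq_Suc add.assoc)

lemma local_mat_carrier'[simp]: "local_mat n i A \<in> carrier_mat (Suc n) (Suc n)"
  by (simp add: local_mat_def)

lemma lm_mult_carrier[simp]: "local_mat n i A * local_mat n j B \<in> carrier_mat (Suc n) (Suc n)"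
  by (rule mult_carrier_mat[of _ "Suc n" "Suc n"]) simp_all

lemma idx5: "4 \<le> n \<Longrightarrow> r < 5 \<Longrightarrow> c < 5 \<Longrightarrow> local_mat n i A $$ (r,c) =
   (if i - 1 \<le> r \<and> r \<le> i + 1 \<and> i - 1 \<le> c \<and> c \<le> i + 1
      then A $$ (r - (i - 1), c - (i - 1)) else (if r = c then 1 else 0))"
  by (simp add: local_mat_def)

lemma one5: "4 \<le> n \<Longrightarrow> r < 5 \<Longrightarrow> c < 5 \<Longrightarrow> 1\<^sub>m (Suc n) $$ (r,c) = (if r = c then 1 else (0::complex))"
  by simp

lemma prod5':
  assumes "n \<ge> 4" "i \<le> 3" "r < 5" "c < 5" "Y \<in> carrier_mat (Suc n) (Suc n)"
  shows "(local_mat n i A * Y) $$ (r,c) = (\<Sum>k<5. local_mat n i A $$ (r,k) * Y $$ (k,c))"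
  using prod5[of n i r c Y A] assms by simp

lemma lm_assoc: "local_mat n i A * local_mat n j B * local_mat n k C = local_mat n i A * (local_mat n j B * local_mat n k C)"
  by (rule assoc_mult_mat[of _ "Suc n" "Suc n" _ "Suc n" _ "Suc n"]) simp_all

definition pinv :: "nat \<Rightarrow> nat \<Rightarrow> nat" where "pinv n r = (if r = 0 then n else r - 1)"
definition Pm :: "nat \<Rightarrow> complex mat" where "Pm n = mat (n+1) (n+1) (\<lambda>(r,c). if c = pinv n r then 1 else 0)"
definition Qm :: "nat \<Rightarrow> complex mat" where "Qm n = mat (n+1) (n+1) (\<lambda>(r,c). if r = pinv n c then 1 else 0)"

lemma pinv_le: "r \<le> n \<Longrightarrow> pinv n r \<le> n" by (auto simp: pinv_def)
lemma pinv_inj: "r \<le> n \<Longrightarrow> c \<le> n \<Longrightarrow> pinv n r = pinv n c \<longleftrightarrow> r = c" by (auto simp: pinv_def)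

lemma Pm_carrier[simp]: "Pm n \<in> carrier_mat (n+1) (n+1)" by (simp add: Pm_def)
lemma Qm_carrier[simp]: "Qm n \<in> carrier_mat (n+1) (n+1)" by (simp add: Qm_def)
lemma Pm_carrier'[simp]: "Pm n \<in> carrier_mat (Suc n) (Suc n)" by (simp add: Pm_def)
lemma Qm_carrier'[simp]: "Qm n \<in> carrier_mat (Suc n) (Suc n)" by (simp add: Qm_def)

lemma Pm_mult: assumes "X \<in> carrier_mat (n+1) (n+1)" "r \<le> n" "c \<le> n"
  shows "(Pm n * X) $$ (r,c) = X $$ (pinv n r, c)"
proof -
  have "(Pm n * X) $$ (r,c) = (\<Sum>k\<in>{0..<n+1}. (if k = pinv n r then 1 else 0) * X $$ (k,c))"
    using assms by (simp add: Pm_def scalar_prod_def)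
  also have "\<dots> = (\<Sum>k\<in>{0..<n+1}. if k = pinv n r then X $$ (k,c) else 0)"
    by (rule sum.cong) auto
  also have "\<dots> = X $$ (pinv n r, c)" using pinv_le[OF assms(2)] by (simp add: sum.delta')
  finally show ?thesis .
qed

lemma Qm_mult: assumes "X \<in> carrier_mat (n+1) (n+1)" "r \<le> n" "c \<le> n"
  shows "(X * Qm n) $$ (r,c) = X $$ (r, pinv n c)"
proof -
  have "(X * Qm n) $$ (r,c) = (\<Sum>k\<in>{0..<n+1}. X $$ (r,k) * (if k = pinv n c then 1 else 0))"
    using assms by (simp add: Qm_def scalar_prod_def)
  also have "\<dots> = (\<Sum>k\<in>{0..<n+1}. if k = pinv n c then X $$ (r,k) else 0)"
    by (rule sum.cong) auto
  also have "\<dots> = X $$ (r, pinv n c)" using pinv_le[OF assms(3)] by (simp add: sum.delta')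
  finally show ?thesis .
qed

lemma PQ: "Pm n * Qm n = 1\<^sub>m (n+1)"
proof (rule eq_matI)
  fix r c assume rc: "r < dim_row (1\<^sub>m (n+1))" "c < dim_col (1\<^sub>m (n+1))"
  then show "(Pm n * Qm n) $$ (r,c) = 1\<^sub>m (n+1) $$ (r,c)"
    using Pm_mult[of "Qm n" n r c] pinv_le[of r n] pinv_le[of c n] pinv_inj[of r n c]
    by (auto simp: Qm_def)
qed (auto simp: Pm_def Qm_def)

lemma QP: "Qm n * Pm n = 1\<^sub>m (n+1)"
  using mat_mult_left_right_inverse[OF Pm_carrier Qm_carrier PQ] .

lemma conj_entry: assumes "X \<in> carrier_mat (n+1) (n+1)" "r \<le> n" "c \<le> n"
  shows "(Pm n * X * Qm n) $$ (r,c) = X $$ (pinv n r, pinv n c)"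
proof -
  have "(Pm n * X * Qm n) $$ (r,c) = (Pm n * X) $$ (r, pinv n c)"
    using assms by (intro Qm_mult mult_carrier_mat[of _ "n+1" "n+1"]) auto
  also have "\<dots> = X $$ (pinv n r, pinv n c)" using assms pinv_le by (intro Pm_mult) auto
  finally show ?thesis .
qed

lemma m3_idx: "i < 3 \<Longrightarrow> j < 3 \<Longrightarrow> m3 [[a,b,c],[d,e,f],[g,h,k]] $$ (i,j) =
  (if i = 0 then (if j = 0 then a else if j = 1 then b else c)
   else if i = 1 then (if j = 0 then d else if j = 1 then e else f)
   else (if j = 0 then g else if j = 1 then h else k))"
  by (auto simp: m3_def mat_of_rows_list_def nth_Cons' )

lemma L1:
  assumes "1 \<le> i" "r \<le> n" "c \<le> n"
  shows "local_mat n i (m3 [[1,0,0],[0,x,y],[0,z,w]]) $$ (r,c) =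
    (if r = i \<and> c = i then x else if r = i \<and> c = i+1 then y else if r = i+1 \<and> c = i then z
     else if r = i+1 \<and> c = i+1 then w else if r = c then 1 else 0)"
proof -
  have "r = i - 1 \<or> r = i \<or> r = i + 1 \<or> r < i - 1 \<or> r > i + 1" by linarith
  moreover have "c = i - 1 \<or> c = i \<or> c = i + 1 \<or> c < i - 1 \<or> c > i + 1" by linarith
  ultimately show ?thesis using assms
    by (elim disjE; simp add: local_mat_idx m3_idx; linarith?)
qed

lemma L2:
  assumes "1 \<le> i" "r \<le> n" "c \<le> n"
  shows "local_mat n i (m3 [[x,y,0],[z,w,0],[0,0,1]]) $$ (r,c) =
    (if r = i-1 \<and> c = i-1 then x else if r = i-1 \<and> c = i then y else if r = i \<and> c = i-1 then z
     else if r = i \<and> c = i then w else if r = c then 1 else 0)"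
proof -
  have "r = i - 1 \<or> r = i \<or> r = i + 1 \<or> r < i - 1 \<or> r > i + 1" by linarith
  moreover have "c = i - 1 \<or> c = i \<or> c = i + 1 \<or> c < i - 1 \<or> c > i + 1" by linarith
  ultimately show ?thesis using assms
    by (elim disjE; simp add: local_mat_idx m3_idx; linarith?)
qed

lemma shift_local:
  assumes "1 \<le> i" "i \<le> n - 1" "r \<le> n" "c \<le> n"
  shows "local_mat n i (m3 [[1,0,0],[0,x,y],[0,z,w]]) $$ (r,c) =
         local_mat n i (m3 [[x,y,0],[z,w,0],[0,0,1]]) $$ (pinv n r, pinv n c)"
proof -
  have a: "pinv n r = i - 1 \<longleftrightarrow> r = i" "pinv n r = i \<longleftrightarrow> r = i + 1"
          "pinv n c = i - 1 \<longleftrightarrow> c = i" "pinv n c = i \<longleftrightarrow> c = i + 1"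
    using assms by (auto simp: pinv_def)
  show ?thesis
    unfolding L1[OF assms(1,3,4)] L2[OF assms(1) pinv_le[OF assms(3)] pinv_le[OF assms(4)]] a
      pinv_inj[OF assms(3,4)] by simp
qed

lemma shift_conj:
  assumes i: "1 \<le> i" "i \<le> n - 1"
  shows "local_mat n i (m3 [[1,0,0],[0,x,y],[0,z,w]]) = Pm n * local_mat n i (m3 [[x,y,0],[z,w,0],[0,0,1]]) * Qm n"
proof (rule eq_matI)
  fix r c assume "r < dim_row (Pm n * local_mat n i (m3 [[x,y,0],[z,w,0],[0,0,1]]) * Qm n)"
    "c < dim_col (Pm n * local_mat n i (m3 [[x,y,0],[z,w,0],[0,0,1]]) * Qm n)"
  then have rc: "r \<le> n" "c \<le> n" by (simp_all add: Pm_def Qm_def)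
  show "local_mat n i (m3 [[1,0,0],[0,x,y],[0,z,w]]) $$ (r,c) = (Pm n * local_mat n i (m3 [[x,y,0],[z,w,0],[0,0,1]]) * Qm n) $$ (r,c)"
    using conj_entry[OF local_mat_carrier rc] shift_local[OF i rc] by simp
qed (simp_all add: Pm_def Qm_def local_mat_def)

lemma equiv_shift:
  shows "equiv_local n (m3 [[1,0,0],[0,x,y],[0,z,w]]) (m3 [[1,0,0],[0,x',y'],[0,z',w']])
                       (m3 [[x,y,0],[z,w,0],[0,0,1]]) (m3 [[x',y',0],[z',w',0],[0,0,1]])"
  unfolding equiv_local_def
  by (rule exI[of _ "Pm n"], rule exI[of _ "Qm n"]) (auto simp: PQ QP shift_conj)

lemma equiv_refl: "equiv_local n M N M N"
  unfolding equiv_local_def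
  by (intro exI[of _ "1\<^sub>m (n+1)"] conjI ballI) (auto simp: local_mat_def)

lemma mat3_eq:
  assumes "A \<in> carrier_mat 3 3"
    "A $$ (0,0) = a" "A $$ (0,1) = b" "A $$ (0,2) = c"
    "A $$ (1,0) = d" "A $$ (1,1) = e" "A $$ (1,2) = f"
    "A $$ (2,0) = g" "A $$ (2,1) = h" "A $$ (2,2) = k"
  shows "A = m3 [[a,b,c],[d,e,f],[g,h,k]]"
proof (rule eq_matI)
  fix i j assume "i < dim_row (m3 [[a,b,c],[d,e,f],[g,h,k]])" "j < dim_col (m3 [[a,b,c],[d,e,f],[g,h,k]])"
  then have "i < 3" "j < 3" by (auto simp: m3_def mat_of_rows_list_def)
  then show "A $$ (i,j) = m3 [[a,b,c],[d,e,f],[g,h,k]] $$ (i,j)"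
    using assms by (auto simp: m3_idx less_Suc_eq numeral_eq_Suc)
qed (use assms in \<open>auto simp: m3_def mat_of_rows_list_def\<close>)

lemma m3_one: "m3 [[1,0,0],[0,1,0],[0,0,1]] = 1\<^sub>m 3"
  by (rule mat3_eq[symmetric]) auto

lemma goal_refl: "family j M N \<Longrightarrow> j \<in> {1..14} \<Longrightarrow> \<exists>j\<in>{1..14}. \<exists>M' N'. family j M' N' \<and> equiv_local n M N M' N'"
  using equiv_refl by blast

lemma goal_eq: "family j M' N' \<Longrightarrow> j \<in> {1..14} \<Longrightarrow> equiv_local n M N M' N' \<Longrightarrow> \<exists>j\<in>{1..14}. \<exists>M' N'. family j M' N' \<and> equiv_local n M N M' N'"
  by blast

lemma via: "x = L - R \<Longrightarrow> L = R \<Longrightarrow> x = (0::complex)" by simp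


lemma inv_helper: assumes "(x::complex) * y = 1" shows "x \<noteq> 0" "y = 1/x"
proof -
  show "x \<noteq> 0" using assms by auto
  then show "y = 1/x" using assms by (simp add: field_simps mult.commute)
qed

lemma N_shape:
  fixes a b c d e f g :: complex
  assumes sq00: "a*a + b*c = 1" and sq01: "a*b + b*d = 0" and sq02: "b*e = 0"
    and sq10: "c*a + d*c = 0" and sq11: "c*b + d*d + e*f = 1" and sq12: "d*e + e*g = 0"
    and sq20: "f*c = 0" and sq21: "f*d + g*f = 0" and sq22: "e*f + g*g = 1"
    and fa1: "e*(a-1) = 0" and fa3: "b*(g-1) = 0" and fa4: "f*(a-1) = 0" and fa6: "c*(g-1) = 0"
    and br0: "-a + a*b*c + a*a = 0"
    and br1: "-a*b*f - a*c*e + a*d*d - a*a*d + b*c - b*c*g + b*d*f + c*d*e + d*e*f = 0"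
    and br2: "a*e*f - b*c*d - b*d*f + b*f*g - c*d*e + c*e*g + d*g*g - d*d*g - e*f = 0"
    and br3: "- e*f*g + g - g*g = 0"
  shows "(\<exists>k. k\<noteq>0 \<and> a=1 \<and> b=k \<and> c=0 \<and> d=-1 \<and> e=0 \<and> f=1/k \<and> g=1) \<or>
         (\<exists>k. k\<noteq>0 \<and> a=0 \<and> b=k \<and> c=1/k \<and> d=0 \<and> e=0 \<and> f=0 \<and> g=1) \<or>
         (\<exists>p. p\<noteq>0 \<and> a=1 \<and> b=0 \<and> c=1/p \<and> d=-1 \<and> e=p \<and> f=0 \<and> g=1) \<or>
         (\<exists>p. p\<noteq>0 \<and> a=1 \<and> b=0 \<and> c=0 \<and> d=0 \<and> e=p \<and> f=1/p \<and> g=0) \<or>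
         (a=1 \<and> b=0 \<and> c=0 \<and> d=1 \<and> e=0 \<and> f=0 \<and> g=1)"
proof (cases "b = 0")
  case False
  note bnz = False
  have "b*(a+d) = 0" using sq01 by (simp add: algebra_simps)
  then have "a + d = 0" using False by simp
  then have e0: "e = 0" "g = 1" "d = -a" using sq02 fa3 False by (auto simp: add_eq_0_iff)
  show ?thesis
  proof (cases "f = 0")
    case False
    have "a = 1" "c = 0" using fa4 sq20 False by auto
    have "2 * (1 - b*f) = 0" by (rule via[OF _ br1]) (simp add: e0 \<open>a=1\<close> \<open>c=0\<close> algebra_simps)
    then have "b*f = 1" by simp
    then show ?thesis using e0 \<open>a=1\<close> \<open>c=0\<close> False bnz
      by (intro disjI1 exI[of _ b]) (auto simp: field_simps)
  next
    case True
    have "2 * (a*a*a) = 0" by (rule via[OF _ br1]) (simp add: e0 True algebra_simps)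
    then have "a = 0" by simp
    with sq00 have "b*c = 1" by simp
    then show ?thesis using e0 \<open>a=0\<close> True \<open>b \<noteq> 0\<close>
      by (intro disjI2 disjI1 exI[of _ b]) (auto simp: field_simps)
  qed
next
  case b0: True
  show ?thesis
  proof (cases "c = 0")
    case False
    have "c*(a+d) = 0" using sq10 by (simp add: algebra_simps)
    then have "a + d = 0" using False by simp
    then have e0: "g = 1" "f = 0" "d = -a" "a*a = 1" using fa6 sq20 sq00 b0 False by (auto simp: add_eq_0_iff)
    show ?thesis
    proof (cases "e = 0")
      case True
      have "2 * (a*a*a) = 0" by (rule via[OF _ br1]) (simp add: e0 b0 True algebra_simps)
      then have "a = 0" by simp
      with e0 show ?thesis by simp
    next
      case False
      have "a = 1" using fa1 False by auto
      have "2 * (1 - c*e) = 0" by (rule via[OF _ br1]) (simp add: e0 b0 \<open>a=1\<close> algebra_simps)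
      then have "c*e = 1" by simp
      then show ?thesis using e0 \<open>a=1\<close> b0 False
        by (intro disjI2 disjI2 disjI1 exI[of _ e]) (auto simp: field_simps)
    qed
  next
    case c0: True
    show ?thesis
    proof (cases "e = 0 \<and> f = 0")
      case False
      have "a = 1" using fa1 fa4 False by auto
      have "e*(d+g) = 0" "f*(d+g) = 0" using sq12 sq21 by (simp_all add: algebra_simps)
      then have "d + g = 0" using False by auto
      then have "g = -d" by (simp add: add_eq_0_iff)
      have "2 * (d*d*d) = 0" by (rule via[OF _ br2]) (simp add: \<open>a=1\<close> b0 c0 \<open>g=-d\<close> algebra_simps)
      then have "d = 0" by simp
      with sq11 b0 have "e*f = 1" by simp
      then have "e \<noteq> 0" "f = 1/e" by (rule inv_helper)+
      then show ?thesis using \<open>a=1\<close> b0 c0 \<open>g=-d\<close> \<open>d=0\<close>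
        by (intro disjI2 disjI2 disjI2 disjI1 exI[of _ e]) (auto simp: field_simps)
    next
      case True
      have aa: "a*a = 1" using sq00 b0 by simp
      have "a*a - a = 0" by (rule via[OF _ br0]) (simp add: b0 algebra_simps)
      then have "a = 1" using aa by simp
      have gg: "g*g = 1" using sq22 True by simp
      have "g - g*g = 0" by (rule via[OF _ br3]) (simp add: True algebra_simps)
      then have "g = 1" using gg by simp
      have dd: "d*d = 1" using sq11 b0 True by simp
      have "d*d - d = 0" by (rule via[OF _ br1]) (simp add: \<open>a=1\<close> b0 c0 True algebra_simps)
      then have "d = 1" using dd by simp
      show ?thesis using True b0 c0 \<open>a=1\<close> \<open>g=1\<close> \<open>d=1\<close> by simp
    qed
  qed
qed

lemma sq1: "(x::complex) * x = 1 \<Longrightarrow> x = 1 \<or> x = -1"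
proof -
  assume "x * x = 1"
  moreover have "(x - 1) * (x + 1) = x * x - 1" by (simp add: algebra_simps)
  ultimately have "(x - 1) * (x + 1) = 0" by simp
  then have "x - 1 = 0 \<or> x + 1 = 0" by simp
  then show ?thesis by (auto simp: eq_neg_iff_add_eq_0)
qed

lemma blk:
  fixes x y z w :: complex
  assumes h1: "x*x + y*z = 1" and h2: "x*y + y*w = 0" and h3: "z*x + w*z = 0" and h4: "z*y + w*w = 1"
  shows "(z \<noteq> 0 \<and> w = -x \<and> y = (1 - x^2)/z) \<or> (z = 0 \<and> x = 1 \<and> w = 1 \<and> y = 0) \<or>
         (z = 0 \<and> x = -1 \<and> w = -1 \<and> y = 0) \<or> (z = 0 \<and> x = 1 \<and> w = -1) \<or> (z = 0 \<and> x = -1 \<and> w = 1)"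
proof (cases "z = 0")
  case False
  have "z * (x + w) = 0" by (rule via[OF _ h3]) (simp add: algebra_simps)
  then have "x + w = 0" using False by simp
  then have "w = -x" by (simp add: add_eq_0_iff)
  moreover have "y = (1 - x^2)/z" using h1 False by (simp add: field_simps power2_eq_square)
  ultimately show ?thesis using False by simp
next
  case True
  have "x*x = 1" "w*w = 1" using h1 h4 True by simp_all
  then have "x = 1 \<or> x = -1" "w = 1 \<or> w = -1" using sq1 by auto
  moreover have "y * (x + w) = 0" by (rule via[OF _ h2]) (simp add: algebra_simps)
  ultimately show ?thesis using True by auto
qed

lemma N_shape':
  fixes a b c d e f g n02 n20 :: complex
  assumes nn00: "a * a + b * c + n02 * n20 = 1"
    and nn01: "a * b + b * d + n02 * f = 0"
    and nn02: "a * n02 + b * e + n02 * g = 0"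
    and nn10: "c * a + d * c + e * n20 = 0"
    and nn11: "c * b + d * d + e * f = 1"
    and nn12: "c * n02 + d * e + e * g = 0"
    and nn20: "n20 * a + f * c + g * n20 = 0"
    and nn21: "n20 * b + f * d + g * f = 0"
    and nn22: "n20 * n02 + f * e + g * g = 1"
    and f1: "e = 0 \<or> a = 1" and f2: "b = 0 \<or> g = 1" and f3: "f = 0 \<or> a = 1" and f4: "c = 0 \<or> g = 1"
    and br00: "a * a + b * (a * c + b * n20) + n02 * (c * c + d * n20) = a"
    and br11: "c * b + d * (a * d + b * f) + e * (c * d + d * f) =
  a * (d * a + e * c) + b * (f * a + g * c) + n02 * n20"
    and br22: "n20 * n02 + f * (a * e + b * g) + g * (c * e + d * g) =
  c * (d * b + e * d) + d * (f * b + g * d) + e * f"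
    and br33: "g = n20 * (d * n02 + e * e) + f * (f * n02 + g * e) + g * g"
    and z1: "n02 = 0" and z2: "n20 = 0"
  shows "(\<exists>k. k\<noteq>0 \<and> a=1 \<and> b=k \<and> c=0 \<and> d=-1 \<and> e=0 \<and> f=1/k \<and> g=1) \<or>
         (\<exists>k. k\<noteq>0 \<and> a=0 \<and> b=k \<and> c=1/k \<and> d=0 \<and> e=0 \<and> f=0 \<and> g=1) \<or>
         (\<exists>p. p\<noteq>0 \<and> a=1 \<and> b=0 \<and> c=1/p \<and> d=-1 \<and> e=p \<and> f=0 \<and> g=1) \<or>
         (\<exists>p. p\<noteq>0 \<and> a=1 \<and> b=0 \<and> c=0 \<and> d=0 \<and> e=p \<and> f=1/p \<and> g=0) \<or>
         (a=1 \<and> b=0 \<and> c=0 \<and> d=1 \<and> e=0 \<and> f=0 \<and> g=1)"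
proof (rule N_shape)
  show "a*a + b*c = 1" using nn00 z1 z2 by simp
  show "a*b + b*d = 0" using nn01 z1 z2 by simp
  show "b*e = 0" using nn02 z1 z2 by simp
  show "c*a + d*c = 0" using nn10 z1 z2 by simp
  show "c*b + d*d + e*f = 1" using nn11 z1 z2 by simp
  show "d*e + e*g = 0" using nn12 z1 z2 by simp
  show "f*c = 0" using nn20 z1 z2 by simp
  show "f*d + g*f = 0" using nn21 z1 z2 by simp
  show "e*f + g*g = 1" using nn22 z1 z2 by (simp add: mult.commute)
  show "e*(a-1) = 0" using f1 by auto
  show "b*(g-1) = 0" using f2 by auto
  show "f*(a-1) = 0" using f3 by auto
  show "c*(g-1) = 0" using f4 by auto
  show "-a + a*b*c + a*a = 0"
    by (rule via[OF _ br00]) (simp add: z1 z2 algebra_simps)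
  show "-a*b*f - a*c*e + a*d*d - a*a*d + b*c - b*c*g + b*d*f + c*d*e + d*e*f = 0"
    by (rule via[OF _ br11]) (simp add: z1 z2 algebra_simps)
  show "a*e*f - b*c*d - b*d*f + b*f*g - c*d*e + c*e*g + d*g*g - d*d*g - e*f = 0"
    by (rule via[OF _ br22]) (simp add: z1 z2 algebra_simps)
  show "- e*f*g + g - g*g = 0"
    by (rule via[OF _ br33]) (simp add: z1 z2 algebra_simps)
qed

lemma M_N4:
  fixes k a b c d e f g n02 n20 m00 m01 m02 m10 m11 m12 m20 m21 m22 :: complex
  assumes k0: "k \<noteq> 0" and Nval: "a = 1" "b = k" "c = 0" "d = -1" "e = 0" "f = 1/k" "g = 1"
    and z1: "n02 = 0" and z2: "n20 = 0" and Mz: "m02 = 0" "m20 = 0"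
    and sfn13: "m12 = 0 \<or> b = 0" and sfn23: "b = 0 \<or> m22 = 1"
    and nfs21: "f = 0 \<or> m00 = 1" and nfs31: "m10 = 0 \<or> f = 0"
    and mx01: "a * m01 + b * (a * m11 + b * m21) + n02 * (c * m11 + d * m21) = b * a + n02 * c"
    and ss01: "m00 * m01 + m01 * m11 + m02 * m21 = 0"
    and ss11: "m10 * m01 + m11 * m11 + m12 * m21 = 1"
    and ss21: "m20 * m01 + m21 * m11 + m22 * m21 = 0"
  shows "(m00=1 \<and> m01=0 \<and> m10=0 \<and> m11=1 \<and> m12=0 \<and> m21=0 \<and> m22=1) \<or>
         (m00=1 \<and> m01 = 2*k - m21*k^2 \<and> m10=0 \<and> m11 = -1 \<and> m12=0 \<and> m22=1)"
proof -
  have m12: "m12 = 0" using sfn13 Nval k0 by auto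
  have m22: "m22 = 1" using sfn23 Nval k0 by auto
  have m00: "m00 = 1" using nfs21 Nval k0 by auto
  have m10: "m10 = 0" using nfs31 Nval k0 by auto
  have r1: "m01 - (k - k*m11 - k*k*m21) = 0"
    by (rule via[OF _ mx01]) (simp add: z1 z2 Nval algebra_simps)
  have sq: "m11*m11 = 1" using ss11 m10 m12 by simp
  have h1: "m01*(1+m11) = 0"
    by (rule via[OF _ ss01]) (simp add: m00 Mz algebra_simps)
  have h2: "m21*(m11+1) = 0"
    by (rule via[OF _ ss21]) (simp add: m22 Mz algebra_simps)
  from sq1[OF sq] show ?thesis
  proof
    assume "m11 = 1"
    then show ?thesis using h1 h2 m00 m10 m12 m22 by simp
  next
    assume "m11 = -1"
    then show ?thesis using r1 m00 m10 m12 m22 by (simp add: power2_eq_square algebra_simps)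
  qed
qed

lemma M_N2:
  fixes k a b c d e f g n02 n20 m00 m01 m02 m10 m11 m12 m20 m21 m22 :: complex
  assumes k0: "k \<noteq> 0" and Nval: "a = 0" "b = k" "c = 1/k" "d = 0" "e = 0" "f = 0" "g = 1"
    and z1: "n02 = 0" and z2: "n20 = 0" and Mz: "m02 = 0" "m20 = 0"
    and mx01: "a * m01 + b * (a * m11 + b * m21) + n02 * (c * m11 + d * m21) = b * a + n02 * c"
    and mx02: "a * m02 + b * (a * m12 + b * m22) + n02 * (c * m12 + d * m22) = b * b + n02 * d"
    and mx23: "f * n02 + g * e = m10 * (d * n02 + e * e) + m11 * (f * n02 + g * e) + m12 * g"
    and ss00: "m00 * m00 + m01 * m10 + m02 * m20 = 1"
    and ss01: "m00 * m01 + m01 * m11 + m02 * m21 = 0"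
    and ss10: "m10 * m00 + m11 * m10 + m12 * m20 = 0"
    and ss11: "m10 * m01 + m11 * m11 + m12 * m21 = 1"
  shows "m21 = 0 \<and> m22 = 1 \<and> m12 = 0 \<and>
    ((m10 \<noteq> 0 \<and> m11 = -m00 \<and> m01 = (1 - m00^2)/m10) \<or> (m10 = 0 \<and> m00 = 1 \<and> m11 = 1 \<and> m01 = 0) \<or>
     (m10 = 0 \<and> m00 = -1 \<and> m11 = -1 \<and> m01 = 0) \<or> (m10 = 0 \<and> m00 = 1 \<and> m11 = -1) \<or> (m10 = 0 \<and> m00 = -1 \<and> m11 = 1))"
proof -
  have "k*k*m21 = 0" by (rule via[OF _ mx01]) (simp add: z1 z2 Nval algebra_simps)
  then have m21: "m21 = 0" using k0 by simp
  have "k*k*(m22 - 1) = 0" by (rule via[OF _ mx02]) (simp add: z1 z2 Nval algebra_simps)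
  then have m22: "m22 = 1" using k0 by simp
  have m12: "m12 = 0" using mx23 Nval z1 by simp
  have "(m10 \<noteq> 0 \<and> m11 = -m00 \<and> m01 = (1 - m00^2)/m10) \<or> (m10 = 0 \<and> m00 = 1 \<and> m11 = 1 \<and> m01 = 0) \<or>
     (m10 = 0 \<and> m00 = -1 \<and> m11 = -1 \<and> m01 = 0) \<or> (m10 = 0 \<and> m00 = 1 \<and> m11 = -1) \<or> (m10 = 0 \<and> m00 = -1 \<and> m11 = 1)"
  proof (rule blk)
    show "m00*m00 + m01*m10 = 1" using ss00 Mz by simp
    show "m00*m01 + m01*m11 = 0" using ss01 Mz by simp
    show "m10*m00 + m11*m10 = 0" using ss10 Mz by simp
    show "m10*m01 + m11*m11 = 1" using ss11 m12 by simp
  qed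
  then show ?thesis using m21 m22 m12 by simp
qed

lemma M_N3:
  fixes p a b c d e f g n02 n20 m00 m01 m02 m10 m11 m12 m20 m21 m22 :: complex
  assumes p0: "p \<noteq> 0" and Nval: "a = 1" "b = 0" "c = 1/p" "d = -1" "e = p" "f = 0" "g = 1"
    and z1: "n02 = 0" and z2: "n20 = 0" and Mz: "m02 = 0" "m20 = 0"
    and mx00: "a * m00 + b * (a * m10 + b * m20) + n02 * (c * m10 + d * m20) = a"
    and mx01: "a * m01 + b * (a * m11 + b * m21) + n02 * (c * m11 + d * m21) = b * a + n02 * c"
    and mx23: "f * n02 + g * e = m10 * (d * n02 + e * e) + m11 * (f * n02 + g * e) + m12 * g"
    and mx32: "n20 * m12 = m20 * (d * b + e * d) + m21 * (f * b + g * d)"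
    and mx33: "g = m20 * (d * n02 + e * e) + m21 * (f * n02 + g * e) + m22 * g"
    and ss10: "m10 * m00 + m11 * m10 + m12 * m20 = 0"
    and ss11: "m10 * m01 + m11 * m11 + m12 * m21 = 1"
    and ss12: "m10 * m02 + m11 * m12 + m12 * m22 = 0"
  shows "(m00=1 \<and> m01=0 \<and> m10=0 \<and> m11=1 \<and> m12=0 \<and> m21=0 \<and> m22=1) \<or>
         (m00=1 \<and> m01=0 \<and> m11 = -1 \<and> m12 = 2*p - m10*p^2 \<and> m21=0 \<and> m22=1)"
proof -
  have m00: "m00 = 1" using mx00 Nval z1 by simp
  have m01: "m01 = 0" using mx01 Nval z1 by simp
  have m21: "m21 = 0" using mx32 Nval z2 Mz by simp
  have m22: "m22 = 1" using mx33 Nval z1 m21 Mz by simp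
  have r1: "(p - m10*p*p - m11*p) - m12 = 0"
    by (rule via[OF _ mx23]) (simp add: z1 z2 Nval algebra_simps)
  have sq: "m11*m11 = 1" using ss11 m01 m21 by simp
  have h1: "m10*(1+m11) = 0"
    by (rule via[OF _ ss10]) (simp add: m00 Mz algebra_simps)
  have h2: "m12*(m11+1) = 0"
    by (rule via[OF _ ss12]) (simp add: m22 Mz algebra_simps)
  from sq1[OF sq] show ?thesis
  proof
    assume "m11 = 1"
    then show ?thesis using h1 h2 m00 m01 m21 m22 by simp
  next
    assume "m11 = -1"
    then show ?thesis using r1 m00 m01 m21 m22 by (simp add: power2_eq_square algebra_simps)
  qed
qed

lemma M_N1:
  fixes p a b c d e f g n02 n20 m00 m01 m02 m10 m11 m12 m20 m21 m22 :: complex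
  assumes p0: "p \<noteq> 0" and Nval: "a = 1" "b = 0" "c = 0" "d = 0" "e = p" "f = 1/p" "g = 0"
    and z1: "n02 = 0" and z2: "n20 = 0" and Mz: "m02 = 0" "m20 = 0"
    and mx00: "a * m00 + b * (a * m10 + b * m20) + n02 * (c * m10 + d * m20) = a"
    and mx01: "a * m01 + b * (a * m11 + b * m21) + n02 * (c * m11 + d * m21) = b * a + n02 * c"
    and mx20: "n20 * m00 + f * (a * m10 + b * m20) + g * (c * m10 + d * m20) = m10 * c + m11 * n20"
    and ss11: "m10 * m01 + m11 * m11 + m12 * m21 = 1"
    and ss12: "m10 * m02 + m11 * m12 + m12 * m22 = 0"
    and ss21: "m20 * m01 + m21 * m11 + m22 * m21 = 0"
    and ss22: "m20 * m02 + m21 * m12 + m22 * m22 = 1"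
  shows "m00 = 1 \<and> m01 = 0 \<and> m10 = 0 \<and>
    ((m21 \<noteq> 0 \<and> m22 = -m11 \<and> m12 = (1 - m11^2)/m21) \<or> (m21 = 0 \<and> m11 = 1 \<and> m22 = 1 \<and> m12 = 0) \<or>
     (m21 = 0 \<and> m11 = -1 \<and> m22 = -1 \<and> m12 = 0) \<or> (m21 = 0 \<and> m11 = 1 \<and> m22 = -1) \<or> (m21 = 0 \<and> m11 = -1 \<and> m22 = 1))"
proof -
  have m00: "m00 = 1" using mx00 Nval z1 by simp
  have m01: "m01 = 0" using mx01 Nval z1 by simp
  have m10: "m10 = 0" using mx20 Nval z2 Mz p0 by simp
  have "(m21 \<noteq> 0 \<and> m22 = -m11 \<and> m12 = (1 - m11^2)/m21) \<or> (m21 = 0 \<and> m11 = 1 \<and> m22 = 1 \<and> m12 = 0) \<or>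
     (m21 = 0 \<and> m11 = -1 \<and> m22 = -1 \<and> m12 = 0) \<or> (m21 = 0 \<and> m11 = 1 \<and> m22 = -1) \<or> (m21 = 0 \<and> m11 = -1 \<and> m22 = 1)"
  proof (rule blk)
    show "m11*m11 + m12*m21 = 1" using ss11 m10 by simp
    show "m11*m12 + m12*m22 = 0" using ss12 Mz by simp
    show "m21*m11 + m22*m21 = 0" using ss21 Mz by simp
    show "m21*m12 + m22*m22 = 1" using ss22 Mz by simp
  qed
  then show ?thesis using m00 m01 m10 by simp
qed

lemma M_I:
  fixes a b c d e f g n02 n20 m00 m01 m02 m10 m11 m12 m20 m21 m22 :: complex
  assumes Nval: "a = 1" "b = 0" "c = 0" "d = 1" "e = 0" "f = 0" "g = 1"
    and z1: "n02 = 0" and z2: "n20 = 0" and Mz: "m02 = 0" "m20 = 0"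
    and mx00: "a * m00 + b * (a * m10 + b * m20) + n02 * (c * m10 + d * m20) = a"
    and mx01: "a * m01 + b * (a * m11 + b * m21) + n02 * (c * m11 + d * m21) = b * a + n02 * c"
    and mx10: "d * (a * m10 + b * m20) + e * (c * m10 + d * m20) = m01 * n20"
    and mx11: "c * m01 + d * (a * m11 + b * m21) + e * (c * m11 + d * m21) =
  m00 * (d * a + e * c) + m01 * (f * a + g * c) + m02 * n20"
    and mx23: "f * n02 + g * e = m10 * (d * n02 + e * e) + m11 * (f * n02 + g * e) + m12 * g"
    and mx32: "n20 * m12 = m20 * (d * b + e * d) + m21 * (f * b + g * d)"
    and mx33: "g = m20 * (d * n02 + e * e) + m21 * (f * n02 + g * e) + m22 * g"
  shows "m00=1 \<and> m01=0 \<and> m10=0 \<and> m11=1 \<and> m12=0 \<and> m21=0 \<and> m22=1"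
  using assms by simp

lemma goal_eq2: "family j M' N' \<Longrightarrow> equiv_local n M N M' N' \<Longrightarrow> j \<in> {1..14} \<Longrightarrow> \<exists>j\<in>{1..14}. \<exists>M' N'. family j M' N' \<and> equiv_local n M N M' N'"
  by blast

theorem theorem4p1:
  fixes n :: nat and M N :: "complex mat"
  assumes "n \<ge> 4"
    and "hom_3local_rep n M N"
  shows "\<exists>j\<in>{1..14}. \<exists>M' N'. family j M' N' \<and> equiv_local n M N M' N'"
proof -
  have n4: "4 \<le> n" using assms(1) .
  from assms(2) have Mc: "M \<in> carrier_mat 3 3" and Nc: "N \<in> carrier_mat 3 3"
    and VT: "VT_rels n (\<lambda>i. local_mat n i M) (\<lambda>i. local_mat n i N)"
    unfolding hom_3local_rep_def by auto
  have i1: "(1::nat) \<in> {1..n-1}" "(3::nat) \<in> {1..n-1}" "(1::nat) \<in> {1..n-2}" using n4 by auto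
  note V = VT[unfolded VT_rels_def]
  have V1: "\<forall>i\<in>{1..n-1}. local_mat n i M * local_mat n i M = 1\<^sub>m (n+1)"
    and V2: "\<forall>i\<in>{1..n-1}. \<forall>j\<in>{1..n-1}. (i + 2 \<le> j \<or> j + 2 \<le> i) \<longrightarrow> local_mat n i M * local_mat n j M = local_mat n j M * local_mat n i M"
    and V3: "\<forall>i\<in>{1..n-2}. local_mat n i N * local_mat n (i+1) N * local_mat n i N = local_mat n (i+1) N * local_mat n i N * local_mat n (i+1) N"
    and V4: "\<forall>i\<in>{1..n-1}. \<forall>j\<in>{1..n-1}. (i + 2 \<le> j \<or> j + 2 \<le> i) \<longrightarrow> local_mat n i N * local_mat n j N = local_mat n j N * local_mat n i N"
    and V5: "\<forall>i\<in>{1..n-1}. local_mat n i N * local_mat n i N = 1\<^sub>m (n+1)"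
    and V6: "\<forall>i\<in>{1..n-1}. \<forall>j\<in>{1..n-1}. (i + 2 \<le> j \<or> j + 2 \<le> i) \<longrightarrow> local_mat n i M * local_mat n j N = local_mat n j N * local_mat n i M"
    and V7: "\<forall>i\<in>{1..n-2}. local_mat n i N * local_mat n (i+1) N * local_mat n i M = local_mat n (i+1) M * local_mat n i N * local_mat n (i+1) N"
    using V by auto
  have SS: "local_mat n 1 M * local_mat n 1 M = 1\<^sub>m (n+1)"
    using V1 i1 by blast
  have NN: "local_mat n 1 N * local_mat n 1 N = 1\<^sub>m (n+1)"
    using V5 i1 by blast
  have SfS: "local_mat n 1 M * local_mat n 3 M = local_mat n 3 M * local_mat n 1 M"
    using V2[rule_format, of 1 3] i1 by simp
  have NfN: "local_mat n 1 N * local_mat n 3 N = local_mat n 3 N * local_mat n 1 N"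
    using V4[rule_format, of 1 3] i1 by simp
  have SfN: "local_mat n 1 M * local_mat n 3 N = local_mat n 3 N * local_mat n 1 M"
    using V6[rule_format, of 1 3] i1 by simp
  have NfS: "local_mat n 3 M * local_mat n 1 N = local_mat n 1 N * local_mat n 3 M"
    using V6[rule_format, of 3 1] i1 by simp
  have Br: "local_mat n 1 N * local_mat n 2 N * local_mat n 1 N = local_mat n 2 N * local_mat n 1 N * local_mat n 2 N"
    using V3[rule_format, of 1] i1 by (simp add: numeral_2_eq_2)
  have Mx: "local_mat n 1 N * local_mat n 2 N * local_mat n 1 M = local_mat n 2 M * local_mat n 1 N * local_mat n 2 N"
    using V7[rule_format, of 1] i1 by (simp add: numeral_2_eq_2)
  obtain a b c d e f g n02 n20 where Nv[simp]: "N$$(0,0) = a" "N$$(0,Suc 0) = b" "N$$(Suc 0,0) = c"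
    "N$$(Suc 0,Suc 0) = d" "N$$(Suc 0,2) = e" "N$$(2,Suc 0) = f" "N$$(2,2) = g" "N$$(0,2) = n02" "N$$(2,0) = n20"
    by blast
  obtain m00 m01 m02 m10 m11 m12 m20 m21 m22 where Mv[simp]: "M$$(0,0) = m00" "M$$(0,Suc 0) = m01" "M$$(0,2) = m02"
    "M$$(Suc 0,0) = m10" "M$$(Suc 0,Suc 0) = m11" "M$$(Suc 0,2) = m12" "M$$(2,0) = m20" "M$$(2,Suc 0) = m21" "M$$(2,2) = m22"
    by blast
  note [simp] = prod5' sum5 idx5 n4 one5 lm_assoc
  note sfs04 = arg_cong[OF SfS, of "\<lambda>X. X $$ (0,4)", simplified]
  note sfs40 = arg_cong[OF SfS, of "\<lambda>X. X $$ (4,0)", simplified]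
  note nfn04 = arg_cong[OF NfN, of "\<lambda>X. X $$ (0,4)", simplified]
  note nfn40 = arg_cong[OF NfN, of "\<lambda>X. X $$ (4,0)", simplified]
  note nfn12 = arg_cong[OF NfN, of "\<lambda>X. X $$ (1,2)", simplified]
  note nfn23 = arg_cong[OF NfN, of "\<lambda>X. X $$ (2,3)", simplified]
  note nfn21 = arg_cong[OF NfN, of "\<lambda>X. X $$ (2,1)", simplified]
  note nfn32 = arg_cong[OF NfN, of "\<lambda>X. X $$ (3,2)", simplified]
  note nn00 = arg_cong[OF NN, of "\<lambda>X. X $$ (0,0)", simplified]
  note nn01 = arg_cong[OF NN, of "\<lambda>X. X $$ (0,1)", simplified]
  note nn02 = arg_cong[OF NN, of "\<lambda>X. X $$ (0,2)", simplified]
  note nn10 = arg_cong[OF NN, of "\<lambda>X. X $$ (1,0)", simplified]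
  note nn11 = arg_cong[OF NN, of "\<lambda>X. X $$ (1,1)", simplified]
  note nn12 = arg_cong[OF NN, of "\<lambda>X. X $$ (1,2)", simplified]
  note nn20 = arg_cong[OF NN, of "\<lambda>X. X $$ (2,0)", simplified]
  note nn21 = arg_cong[OF NN, of "\<lambda>X. X $$ (2,1)", simplified]
  note nn22 = arg_cong[OF NN, of "\<lambda>X. X $$ (2,2)", simplified]
  note ss00 = arg_cong[OF SS, of "\<lambda>X. X $$ (0,0)", simplified]
  note ss01 = arg_cong[OF SS, of "\<lambda>X. X $$ (0,1)", simplified]
  note ss02 = arg_cong[OF SS, of "\<lambda>X. X $$ (0,2)", simplified]
  note ss10 = arg_cong[OF SS, of "\<lambda>X. X $$ (1,0)", simplified]
  note ss11 = arg_cong[OF SS, of "\<lambda>X. X $$ (1,1)", simplified]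
  note ss12 = arg_cong[OF SS, of "\<lambda>X. X $$ (1,2)", simplified]
  note ss20 = arg_cong[OF SS, of "\<lambda>X. X $$ (2,0)", simplified]
  note ss21 = arg_cong[OF SS, of "\<lambda>X. X $$ (2,1)", simplified]
  note ss22 = arg_cong[OF SS, of "\<lambda>X. X $$ (2,2)", simplified]
  note br00 = arg_cong[OF Br, of "\<lambda>X. X $$ (0,0)", simplified]
  note br11 = arg_cong[OF Br, of "\<lambda>X. X $$ (1,1)", simplified]
  note br22 = arg_cong[OF Br, of "\<lambda>X. X $$ (2,2)", simplified]
  note br33 = arg_cong[OF Br, of "\<lambda>X. X $$ (3,3)", simplified]
  note mx00 = arg_cong[OF Mx, of "\<lambda>X. X $$ (0,0)", simplified]
  note mx01 = arg_cong[OF Mx, of "\<lambda>X. X $$ (0,1)", simplified]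
  note mx02 = arg_cong[OF Mx, of "\<lambda>X. X $$ (0,2)", simplified]
  note mx20 = arg_cong[OF Mx, of "\<lambda>X. X $$ (2,0)", simplified]
  note mx23 = arg_cong[OF Mx, of "\<lambda>X. X $$ (2,3)", simplified]
  note mx32 = arg_cong[OF Mx, of "\<lambda>X. X $$ (3,2)", simplified]
  note mx33 = arg_cong[OF Mx, of "\<lambda>X. X $$ (3,3)", simplified]
  note sfn13 = arg_cong[OF SfN, of "\<lambda>X. X $$ (1,3)", simplified]
  note sfn23 = arg_cong[OF SfN, of "\<lambda>X. X $$ (2,3)", simplified]
  note nfs21 = arg_cong[OF NfS, of "\<lambda>X. X $$ (2,1)", simplified]
  note nfs31 = arg_cong[OF NfS, of "\<lambda>X. X $$ (3,1)", simplified]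
  note mx10 = arg_cong[OF Mx, of "\<lambda>X. X $$ (1,0)", simplified]
  note mx11 = arg_cong[OF Mx, of "\<lambda>X. X $$ (1,1)", simplified]
  have Mz: "m02 = 0" "m20 = 0" using sfs04 sfs40 by simp_all
  have Nz: "n02 = 0" "n20 = 0" using nfn04 nfn40 by simp_all
  note NS = N_shape'[OF nn00 nn01 nn02 nn10 nn11 nn12 nn20 nn21 nn22 nfn12 nfn23 nfn21 nfn32 br00 br11 br22 br33 Nz]
  from NS show ?thesis
  proof (elim disjE exE conjE)
    fix k assume k0: "k \<noteq> 0" and Nval: "a = 1" "b = k" "c = 0" "d = -1" "e = 0" "f = 1/k" "g = 1"
    have Neq: "N = m3 [[1,k,0],[0,-1,0],[0,1/k,1]]" by (rule mat3_eq[OF Nc]) (simp_all add: Nval Nz)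
    from M_N4[OF k0 Nval Nz Mz sfn13 sfn23 nfs21 nfs31 mx01 ss01 ss11 ss21] show ?thesis
    proof (elim disjE conjE)
      assume h: "m00 = 1" "m01 = 0" "m10 = 0" "m11 = 1" "m12 = 0" "m21 = 0" "m22 = 1"
      have Meq: "M = 1\<^sub>m 3" unfolding m3_one[symmetric]
        by (intro mat3_eq[OF Mc]) (simp_all add: Mz h)
      have "family 8 M N" unfolding family_def Meq Neq using k0 by auto
      then show ?thesis by (rule goal_refl) simp
    next
      assume h: "m00 = 1" "m01 = 2*k - m21*k^2" "m10 = 0" "m11 = -1" "m12 = 0" "m22 = 1"
      have Meq: "M = m3 [[1,2*k - m21*k^2,0],[0,-1,0],[0,m21,1]]"
        by (intro mat3_eq[OF Mc]) (simp_all add: Mz h)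
      have "family 4 M N" unfolding family_def Meq Neq using k0 by auto
      then show ?thesis by (rule goal_refl) simp
    qed
  next
    fix k assume k0: "k \<noteq> 0" and Nval: "a = 0" "b = k" "c = 1/k" "d = 0" "e = 0" "f = 0" "g = 1"
    have Neq: "N = m3 [[0,k,0],[1/k,0,0],[0,0,1]]" by (rule mat3_eq[OF Nc]) (simp_all add: Nval Nz)
    from M_N2[OF k0 Nval Nz Mz mx01 mx02 mx23 ss00 ss01 ss10 ss11]
    have m21: "m21 = 0" and m22: "m22 = 1" and m12: "m12 = 0" and B:
      "(m10 \<noteq> 0 \<and> m11 = -m00 \<and> m01 = (1 - m00^2)/m10) \<or> (m10 = 0 \<and> m00 = 1 \<and> m11 = 1 \<and> m01 = 0) \<or>
       (m10 = 0 \<and> m00 = -1 \<and> m11 = -1 \<and> m01 = 0) \<or> (m10 = 0 \<and> m00 = 1 \<and> m11 = -1) \<or> (m10 = 0 \<and> m00 = -1 \<and> m11 = 1)"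
      by blast+
    from B show ?thesis
    proof (elim disjE conjE)
      assume h: "m10 \<noteq> 0" "m11 = -m00" "m01 = (1 - m00^2)/m10"
      have Meq: "M = m3 [[-m11,(1 - m11^2)/m10,0],[m10,m11,0],[0,0,1]]"
        by (intro mat3_eq[OF Mc]) (simp_all add: Mz m12 m22 m21 h)
      have "family 2 M N" unfolding family_def Meq Neq using k0 h(1) by auto
      then show ?thesis by (rule goal_refl) simp
    next
      assume h: "m10 = 0" "m00 = 1" "m11 = 1" "m01 = 0"
      have Meq: "M = 1\<^sub>m 3" unfolding m3_one[symmetric]
        by (intro mat3_eq[OF Mc]) (simp_all add: Mz m12 m22 m21 h)
      have "family 13 M N" unfolding family_def Meq Neq using k0 by auto
      then show ?thesis by (rule goal_refl) simp
    next
      assume h: "m10 = 0" "m00 = -1" "m11 = -1" "m01 = 0"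
      have Meq: "M = m3 [[-1,0,0],[0,-1,0],[0,0,1]]"
        by (intro mat3_eq[OF Mc]) (simp_all add: Mz m12 m22 m21 h)
      have "family 12 M N" unfolding family_def Meq Neq using k0 by auto
      then show ?thesis by (rule goal_refl) simp
    next
      assume h: "m10 = 0" "m00 = 1" "m11 = -1"
      have Meq: "M = m3 [[1,m01,0],[0,-1,0],[0,0,1]]"
        by (intro mat3_eq[OF Mc]) (simp_all add: Mz m12 m22 m21 h)
      have "family 5 M N" unfolding family_def Meq Neq using k0 by auto
      then show ?thesis by (rule goal_refl) simp
    next
      assume h: "m10 = 0" "m00 = -1" "m11 = 1"
      have Meq: "M = m3 [[-1,m01,0],[0,1,0],[0,0,1]]"
        by (intro mat3_eq[OF Mc]) (simp_all add: Mz m12 m22 m21 h)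
      have "family 6 M N" unfolding family_def Meq Neq using k0 by auto
      then show ?thesis by (rule goal_refl) simp
    qed
  next
    fix p assume p0: "p \<noteq> 0" and Nval: "a = 1" "b = 0" "c = 1/p" "d = -1" "e = p" "f = 0" "g = 1"
    have Neq: "N = m3 [[1,0,0],[1/p,-1,p],[0,0,1]]" by (rule mat3_eq[OF Nc]) (simp_all add: Nval Nz)
    from M_N3[OF p0 Nval Nz Mz mx00 mx01 mx23 mx32 mx33 ss10 ss11 ss12] show ?thesis
    proof (elim disjE conjE)
      assume h: "m00 = 1" "m01 = 0" "m10 = 0" "m11 = 1" "m12 = 0" "m21 = 0" "m22 = 1"
      have Meq: "M = 1\<^sub>m 3" unfolding m3_one[symmetric]
        by (intro mat3_eq[OF Mc]) (simp_all add: Mz h)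
      have "family 7 M N" unfolding family_def Meq Neq using p0 by auto
      then show ?thesis by (rule goal_refl) simp
    next
      assume h: "m00 = 1" "m01 = 0" "m11 = -1" "m12 = 2*p - m10*p^2" "m21 = 0" "m22 = 1"
      have Meq: "M = m3 [[1,0,0],[m10,-1,2*p - m10*p^2],[0,0,1]]"
        by (intro mat3_eq[OF Mc]) (simp_all add: Mz h)
      have "family 3 M N" unfolding family_def Meq Neq using p0 by auto
      then show ?thesis by (rule goal_refl) simp
    qed
  next
    fix p assume p0: "p \<noteq> 0" and Nval: "a = 1" "b = 0" "c = 0" "d = 0" "e = p" "f = 1/p" "g = 0"
    have Neq: "N = m3 [[1,0,0],[0,0,p],[0,1/p,0]]" by (rule mat3_eq[OF Nc]) (simp_all add: Nval Nz)
    from M_N1[OF p0 Nval Nz Mz mx00 mx01 mx20 ss11 ss12 ss21 ss22]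
    have m00: "m00 = 1" and m01: "m01 = 0" and m10: "m10 = 0" and B:
      "(m21 \<noteq> 0 \<and> m22 = -m11 \<and> m12 = (1 - m11^2)/m21) \<or> (m21 = 0 \<and> m11 = 1 \<and> m22 = 1 \<and> m12 = 0) \<or>
       (m21 = 0 \<and> m11 = -1 \<and> m22 = -1 \<and> m12 = 0) \<or> (m21 = 0 \<and> m11 = 1 \<and> m22 = -1) \<or> (m21 = 0 \<and> m11 = -1 \<and> m22 = 1)"
      by blast+
    from B show ?thesis
    proof (elim disjE conjE)
      assume h: "m21 \<noteq> 0" "m22 = -m11" "m12 = (1 - m11^2)/m21"
      have Meq: "M = m3 [[1,0,0],[0,m11,(1 - m11^2)/m21],[0,m21,-m11]]"
        by (intro mat3_eq[OF Mc]) (simp_all add: Mz m00 m01 m10 h)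
      have "family 1 M N" unfolding family_def Meq Neq using p0 h(1) by auto
      then show ?thesis by (rule goal_refl) simp
    next
      assume h: "m21 = 0" "m11 = 1" "m22 = 1" "m12 = 0"
      have Meq: "M = 1\<^sub>m 3" unfolding m3_one[symmetric]
        by (intro mat3_eq[OF Mc]) (simp_all add: Mz m00 m01 m10 h)
      have "family 11 M N" unfolding family_def Meq Neq using p0 by auto
      then show ?thesis by (rule goal_refl) simp
    next
      assume h: "m21 = 0" "m11 = -1" "m22 = -1" "m12 = 0"
      have Meq: "M = m3 [[1,0,0],[0,-1,0],[0,0,-1]]"
        by (intro mat3_eq[OF Mc]) (simp_all add: Mz m00 m01 m10 h)
      have "family 9 M N" unfolding family_def Meq Neq using p0 by auto
      then show ?thesis by (rule goal_refl) simp
    next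
      assume h: "m21 = 0" "m11 = 1" "m22 = -1"
      have Meq: "M = m3 [[1,0,0],[0,1,m12],[0,0,-1]]"
        by (intro mat3_eq[OF Mc]) (simp_all add: Mz m00 m01 m10 h)
      have "family 5 (m3 [[1,m12,0],[0,-1,0],[0,0,1]]) (m3 [[0,p,0],[1/p,0,0],[0,0,1]])"
        unfolding family_def using p0 by auto
      moreover have "equiv_local n M N (m3 [[1,m12,0],[0,-1,0],[0,0,1]]) (m3 [[0,p,0],[1/p,0,0],[0,0,1]])"
        unfolding Meq Neq by (rule equiv_shift)
      ultimately show ?thesis by (rule goal_eq2) simp
    next
      assume h: "m21 = 0" "m11 = -1" "m22 = 1"
      have Meq: "M = m3 [[1,0,0],[0,-1,m12],[0,0,1]]"
        by (intro mat3_eq[OF Mc]) (simp_all add: Mz m00 m01 m10 h)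
      have "family 6 (m3 [[-1,m12,0],[0,1,0],[0,0,1]]) (m3 [[0,p,0],[1/p,0,0],[0,0,1]])"
        unfolding family_def using p0 by auto
      moreover have "equiv_local n M N (m3 [[-1,m12,0],[0,1,0],[0,0,1]]) (m3 [[0,p,0],[1/p,0,0],[0,0,1]])"
        unfolding Meq Neq by (rule equiv_shift)
      ultimately show ?thesis by (rule goal_eq2) simp
    qed
  next
    assume Nval: "a = 1" "b = 0" "c = 0" "d = 1" "e = 0" "f = 0" "g = 1"
    have Neq: "N = 1\<^sub>m 3" unfolding m3_one[symmetric] by (rule mat3_eq[OF Nc]) (simp_all add: Nval Nz)
    from M_I[OF Nval Nz Mz mx00 mx01 mx10 mx11 mx23 mx32 mx33]
    have h: "m00 = 1" "m01 = 0" "m10 = 0" "m11 = 1" "m12 = 0" "m21 = 0" "m22 = 1" by blast+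
    then have Meq: "M = 1\<^sub>m 3" unfolding m3_one[symmetric]
      by (intro mat3_eq[OF Mc]) (simp_all add: Mz)
    have "family 14 M N" unfolding family_def Meq Neq by auto
    then show ?thesis by (rule goal_refl) simp
  qed
qed

end
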